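(* Let $\delta\in(0,1/3)$. For $\tau>n^{-\delta}$, $$ \int_{-\pi}^{\pi} e^{-in(\theta-\tau\sin(\theta))}\, e^{-2n\tau\sin^2(\theta/2)}\,\frac{d\theta}{2\pi} \;=\;\frac{e^{n(\ln(\tau)+1-\tau)}}{\sqrt{2\pi n}}\,\bigl(1+o(1)\bigr)+o\!\left(\frac1n\right), $$ as $n\to\infty$. *)

theory Defs
  imports "HOL-Analysis.Analysis" "HOL-Library.Landau_Symbols"
begin

definition lemma3_integrand :: "nat \<Rightarrow> real \<Rightarrow> real \<Rightarrow> complex" where
  "lemma3_integrand n \<tau> \<theta> =
     exp (- \<i> * of_real (real n * (\<theta> - \<tau> * sin \<theta>)))
     * of_real (exp (- 2 * real n * \<tau> * (sin (\<theta> / 2))\<^sup>2))"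

definition lemma3_I :: "nat \<Rightarrow> real \<Rightarrow> complex" where
  "lemma3_I n \<tau> = integral {-pi..pi} (lemma3_integrand n \<tau>) / of_real (2 * pi)"

definition lemma3_main :: "nat \<Rightarrow> real \<Rightarrow> real" where
  "lemma3_main n \<tau> = exp (real n * (ln \<tau> + 1 - \<tau>)) / sqrt (2 * pi * real n)"

end

theory Submission
  imports Defs "HOL-Complex_Analysis.Complex_Analysis" "HOL-Real_Asymp.Real_Asymp"
begin

lemma deriv_exp_pow: "(deriv ^^ k) (\<lambda>u. exp (c * u)) = (\<lambda>u::complex. c ^ k * exp (c * u))"
proof (induction k)
  case 0 then show ?case by simp
next
  case (Suc k)
  have "deriv (\<lambda>u. c ^ k * exp (c * u)) = (\<lambda>u. c ^ Suc k * exp (c * u))"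
  proof
    fix u :: complex
    have "((\<lambda>u. c ^ k * exp (c * u)) has_field_derivative c ^ k * (exp (c * u) * c)) (at u)"
      by (auto intro!: derivative_eq_intros)
    then show "deriv (\<lambda>u. c ^ k * exp (c * u)) u = c ^ Suc k * exp (c * u)"
      by (simp add: DERIV_imp_deriv algebra_simps)
  qed
  then show ?case using Suc by simp
qed

lemma fourier_exp:
  fixes b :: real and n :: nat
  shows "((\<lambda>t. exp (of_real b * cis t) * cis (- (real n * t))) has_integral
           of_real (2 * pi * b ^ n / fact n)) {-pi..pi}"
proof -
  let ?g = "\<lambda>u::complex. exp (- of_real b * u)"
  have H: "((\<lambda>u. ?g u / (u - 0) ^ Suc n) has_contour_integral
        ((2 * pi * \<i>) / (fact n) * (deriv ^^ n) ?g 0)) (circlepath 0 1)"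
    by (rule Cauchy_has_contour_integral_higher_derivative_circlepath)
       (auto intro!: holomorphic_intros continuous_intros)
  have H2: "((\<lambda>t. ?g (cis t) / (cis t) ^ Suc n * \<i> * cis t) has_integral
        ((2 * pi * \<i>) / (fact n) * (- of_real b) ^ n)) {0..2*pi}"
    using H unfolding circlepath_def deriv_exp_pow
    by (subst (asm) has_contour_integral_part_circlepath_iff) auto
  have H3: "((\<lambda>t. ?g (cis (t + pi)) / (cis (t + pi)) ^ Suc n * \<i> * cis (t + pi)) has_integral
        ((2 * pi * \<i>) / (fact n) * (- of_real b) ^ n)) {-pi..pi}"
    using has_integral_shift_real_ivl[OF H2, of pi] by simp
  have eq: "?g (cis (t + pi)) / (cis (t + pi)) ^ Suc n * \<i> * cis (t + pi)
      = \<i> * (-1) ^ n * (exp (of_real b * cis t) * cis (- (real n * t)))" for t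
  proof -
    have c: "cis (t + pi) = - cis t" by (simp add: cis_def complex_eq_iff)
    have d: "cis (- (real n * t)) = inverse (cis t ^ n)"
      by (simp only: Complex.DeMoivre cis_inverse)
    have nz: "cis t \<noteq> 0" by simp
    have e: "- (of_real b) * (- cis t) = of_real b * cis t" by simp
    have "exp (- complex_of_real b * cis (t + pi)) / cis (t + pi) ^ Suc n * \<i> * cis (t + pi)
        = exp (of_real b * cis t) * (\<i> * ((- cis t) / (- cis t) ^ Suc n))"
      unfolding c e by (simp only: mult_ac divide_inverse)
    also have "(- cis t) / (- cis t) ^ Suc n = inverse ((- cis t) ^ n)"
      using nz by (simp add: field_simps)
    also have "inverse ((- cis t) ^ n) = (-1) ^ n * inverse (cis t ^ n)"
      by (subst power_minus) (simp add: inverse_mult_distrib power_inverse[symmetric])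
    finally show ?thesis unfolding d by (simp only: mult_ac)
  qed
  have H4: "((\<lambda>t. \<i> * (-1) ^ n * (exp (of_real b * cis t) * cis (- (real n * t)))) has_integral
        ((2 * pi * \<i>) / (fact n) * (- of_real b) ^ n)) {-pi..pi}"
    using H3 unfolding eq .
  note H5 = has_integral_mult_right[OF H4, of "- \<i> * (-1) ^ n"]
  have k1: "(-1::complex)^n * (-1)^n = 1"
    by (simp flip: power_mult_distrib)
  have k: "(-\<i> * (-1)^n) * (\<i> * (-1)^n * z) = (z::complex)" for z
    using k1 by (simp add: algebra_simps)
  have k2: "(-\<i> * (-1)^n) * ((2 * pi * \<i>) / (fact n) * (- of_real b) ^ n)
     = (of_real (2 * pi * b ^ n / fact n) :: complex)"
    using k1 by (simp add: power_minus[of "of_real b"] algebra_simps)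
  show ?thesis
    using H5 unfolding k k2 .
qed
lemma ln_ineq_lower:
  fixes x :: real assumes "0 \<le> x" "x < 1"
  shows "2 * x \<le> ln (1 + x) - ln (1 - x)"
proof -
  let ?f = "\<lambda>y::real. ln (1 + y) - ln (1 - y) - 2 * y"
  have "?f 0 \<le> ?f x"
  proof (rule DERIV_nonneg_imp_nondecreasing[OF assms(1)])
    fix y :: real assume y: "0 \<le> y" "y \<le> x"
    then have y1: "y < 1" using assms by simp
    have "DERIV ?f y :> (1 / (1 + y) - (-1) / (1 - y) - 2)"
      using y y1 by (auto intro!: derivative_eq_intros)
    moreover have "1 / (1 + y) - (-1) / (1 - y) - 2 = 2 * y^2 / ((1 + y) * (1 - y))"
      using y y1 by (simp add: divide_simps) (simp add: algebra_simps power2_eq_square)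
    moreover have "2 * y^2 / ((1 + y) * (1 - y)) \<ge> 0" using y y1 by simp
    ultimately show "\<exists>d. DERIV ?f y :> d \<and> d \<ge> 0" by metis
  qed
  then show ?thesis by simp
qed

lemma inv_sum_eq: fixes y :: real assumes "0 \<le> y" "y < 1"
  shows "1 / (1 + y) - (-1) / (1 - y) = 2 / (1 - y * y)"
proof -
  have a: "1 + y \<noteq> 0" "1 - y \<noteq> 0" using assms by auto
  have "1 - y * y = (1 + y) * (1 - y)" by (simp add: algebra_simps)
  then show ?thesis using a by (simp add: field_simps)
qed

lemma ln_ineq_upper:
  fixes x :: real assumes "0 \<le> x" "x \<le> 1/2" "3 * x * x \<le> 1"
  shows "ln (1 + x) - ln (1 - x) \<le> 2 * x + x^3"
proof -
  let ?f = "\<lambda>y::real. 2 * y + y^3 - (ln (1 + y) - ln (1 - y))"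
  have "?f 0 \<le> ?f x"
  proof (rule DERIV_nonneg_imp_nondecreasing[OF assms(1)])
    fix y :: real assume y: "0 \<le> y" "y \<le> x"
    then have y1: "y < 1" using assms by simp
    have yy: "3 * y * y \<le> 1" using y assms(3) by (meson mult_mono order_trans mult_left_mono mult_nonneg_nonneg zero_le_numeral)
    have p: "0 < 1 - y * y" using yy y by linarith
    have D: "DERIV ?f y :> (2 + 3 * y^2 - (1 / (1 + y) - (-1) / (1 - y)))"
      using y y1 by - (rule derivative_eq_intros refl | simp)+
    have L: "2 / (1 - y * y) \<le> 2 + 3 * y^2"
    proof -
      have "2 \<le> (2 + 3 * y * y) * (1 - y * y)"
      proof -
        have "(2 + 3 * y * y) * (1 - y * y) = 2 + y * y * (1 - 3 * y * y)" by (simp add: algebra_simps)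
        moreover have "0 \<le> y * y * (1 - 3 * y * y)" using yy by simp
        ultimately show ?thesis by linarith
      qed
      then show ?thesis unfolding pos_divide_le_eq[OF p] power2_eq_square by (simp only: mult_ac)
    qed
    show "\<exists>d. DERIV ?f y :> d \<and> d \<ge> 0"
    proof (intro exI conjI)
      show "DERIV ?f y :> (2 + 3 * y^2 - (1 / (1 + y) - (-1) / (1 - y)))" by (rule D)
      show "0 \<le> 2 + 3 * y^2 - (1 / (1 + y) - (-1) / (1 - y))"
        unfolding inv_sum_eq[OF y(1) y1] using L by linarith
    qed
  qed
  then show ?thesis by simp
qed

definition dd :: "nat \<Rightarrow> real" where
  "dd n = ln (fact n) - (real n + 1/2) * ln (real n) + real n"

lemma dd_step: assumes "n \<ge> 1"
  shows "dd n - dd (Suc n) = (real n + 1/2) * (ln (real n + 1) - ln (real n)) - 1"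
proof -
  have "ln (fact (Suc n) :: real) = ln (real n + 1) + ln (fact n)"
    by (simp add: ln_mult add.commute)
  then show ?thesis unfolding dd_def by (simp add: algebra_simps)
qed

lemma ln_diff_x: assumes "n \<ge> 1"
  shows "ln (real n + 1) - ln (real n) = ln (1 + 1 / (2 * real n + 1)) - ln (1 - 1 / (2 * real n + 1))"
proof -
  have p: "2 * real n + 1 > 0" by simp
  have n0: "real n > 0" using assms by simp
  have a: "1 + 1 / (2 * real n + 1) = (2 * (real n + 1)) / (2 * real n + 1)"
    using p by (simp add: field_simps)
  have b: "1 - 1 / (2 * real n + 1) = (2 * real n) / (2 * real n + 1)"
    using p by (simp add: field_simps)
  have c: "ln (2 * (real n + 1)) = ln 2 + ln (real n + 1)" using ln_mult[of 2 "real n + 1"] by simp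
  have d: "ln (2 * real n) = ln 2 + ln (real n)" using n0 ln_mult[of 2 "real n"] by simp
  have e: "ln ((2 * (real n + 1)) / (2 * real n + 1)) = ln (2 * (real n + 1)) - ln (2 * real n + 1)"
    using p by (intro ln_divide_pos) auto
  have f: "ln ((2 * real n) / (2 * real n + 1)) = ln (2 * real n) - ln (2 * real n + 1)"
    using p n0 by (intro ln_divide_pos) auto
  show ?thesis unfolding a b e f c d by simp
qed

lemma dd_dec: assumes "n \<ge> 1" shows "dd (Suc n) \<le> dd n"
proof -
  define x where "x = 1 / (2 * real n + 1)"
  have x0: "0 \<le> x" "x < 1" using assms by (auto simp: x_def field_simps)
  have "2 * x \<le> ln (1 + x) - ln (1 - x)" by (rule ln_ineq_lower[OF x0])
  then have L: "2 * x \<le> ln (real n + 1) - ln (real n)"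
    unfolding ln_diff_x[OF assms] x_def[symmetric] .
  have "(real n + 1/2) * (2 * x) \<le> (real n + 1/2) * (ln (real n + 1) - ln (real n))"
    by (rule mult_left_mono[OF L]) simp
  moreover have "(real n + 1/2) * (2 * x) = 1" unfolding x_def by (simp add: field_simps)
  ultimately show ?thesis using dd_step[OF assms] by linarith
qed

lemma dd_inc: assumes "n \<ge> 1" shows "dd n - 1 / (8 * real n) \<le> dd (Suc n) - 1 / (8 * real (Suc n))"
proof -
  define x where "x = 1 / (2 * real n + 1)"
  have n0: "real n \<ge> 1" using assms by simp
  have x3: "0 \<le> x" "x \<le> 1/3" using n0 by (auto simp: x_def field_simps)
  have "x * x \<le> (1/3) * (1/3)" by (rule mult_mono) (use x3 in auto)
  then have x0: "0 \<le> x" "x \<le> 1/2" "3 * x * x \<le> 1" using x3 by auto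
  have "ln (1 + x) - ln (1 - x) \<le> 2 * x + x^3" by (rule ln_ineq_upper[OF x0])
  then have L: "ln (real n + 1) - ln (real n) \<le> 2 * x + x^3"
    unfolding ln_diff_x[OF assms] x_def[symmetric] .
  have "(ln (real n + 1) - ln (real n)) * (real n + 1/2) \<le> (2 * x + x^3) * (real n + 1/2)"
    by (rule mult_right_mono[OF L]) simp
  moreover have "(2 * x + x^3) * (real n + 1/2) = 1 + 1 / (2 * (2 * real n + 1)^2)"
  proof -
    define m where "m = 2 * real n + 1"
    have m0: "m > 0" unfolding m_def by simp
    have "real n + 1/2 = m / 2" unfolding m_def by simp
    moreover have "x = 1 / m" unfolding x_def m_def ..
    ultimately show ?thesis using m0
      by (simp only: m_def[symmetric]) (simp add: field_simps power2_eq_square power3_eq_cube)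
  qed
  moreover have "1 / (2 * (2 * real n + 1)^2) \<le> 1 / (8 * real n) - 1 / (8 * real (Suc n))"
  proof -
    have "1 / (8 * real n) - 1 / (8 * real (Suc n)) = 1 / (8 * real n * (real n + 1))"
      using n0 by (simp add: field_simps)
    moreover have "1 / (2 * (2 * real n + 1)^2) \<le> 1 / (8 * real n * (real n + 1))"
    proof (rule divide_left_mono)
      show "8 * real n * (real n + 1) \<le> 2 * (2 * real n + 1)^2" by (simp add: power2_eq_square algebra_simps)
      show "0 < 2 * (2 * real n + 1)^2 * (8 * real n * (real n + 1))" using n0 by (intro mult_pos_pos) auto
      show "(0::real) \<le> 1" by simp
    qed
    ultimately show ?thesis by simp
  qed
  ultimately show ?thesis using dd_step[OF assms] by (simp only: mult.commute)
qed

lemma dd_conv: obtains C where "(\<lambda>m. dd (Suc m)) \<longlonglongrightarrow> C"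
proof -
  define E where "E m = dd (Suc m) - 1 / (8 * real (Suc m))" for m
  have "incseq E" unfolding E_def by (rule incseq_SucI) (rule dd_inc, simp)
  then have "E 0 \<le> E m" for m by (simp add: incseq_def)
  then have lb: "dd 1 - 1/8 \<le> dd (Suc m)" for m
  proof -
    have "0 \<le> 1 / (8 * real (Suc m))" by simp
    moreover have "E 0 = dd 1 - 1/8" by (simp add: E_def)
    moreover have "E m = dd (Suc m) - 1 / (8 * real (Suc m))" by (simp only: E_def)
    ultimately show ?thesis using \<open>E 0 \<le> E m\<close> by linarith
  qed
  have "decseq (\<lambda>m. dd (Suc m))" by (rule decseq_SucI) (rule dd_dec, simp)
  from decseq_convergent[OF this, of "dd 1 - 1/8"] lb obtain L where "(\<lambda>m. dd (Suc m)) \<longlonglongrightarrow> L"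
    by blast
  then show ?thesis using that by blast
qed

definition s2 :: "nat \<Rightarrow> real" where
  "s2 n = fact n ^ 2 * exp (real n) ^ 2 / real n ^ (2 * n + 1)"

lemma s2_dd: assumes "n \<ge> 1" shows "s2 n = exp (2 * dd n)"
proof -
  have n0: "real n > 0" using assms by simp
  have "2 * dd n = (ln (fact n) + real n) + (ln (fact n) + real n) - real (2 * n + 1) * ln (real n)"
    unfolding dd_def by (simp add: algebra_simps)
  then have "exp (2 * dd n) = exp (ln (fact n) + real n) * exp (ln (fact n) + real n) / exp (real (2 * n + 1) * ln (real n))"
    by (simp only: exp_add exp_diff)
  also have "exp (ln (fact n) + real n) = fact n * exp (real n)" by (simp add: exp_add)
  also have "exp (real (2 * n + 1) * ln (real n)) = real n ^ (2 * n + 1)"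
    by (subst exp_of_nat_mult) (use n0 in simp)
  finally show ?thesis unfolding s2_def by (simp add: power2_eq_square mult_ac)
qed

lemma s2_conv: obtains M where "s2 \<longlonglongrightarrow> M" "M > 0"
proof -
  obtain C where C: "(\<lambda>m. dd (Suc m)) \<longlonglongrightarrow> C" using dd_conv by blast
  have "(\<lambda>m. exp (2 * dd (Suc m))) \<longlonglongrightarrow> exp (2 * C)"
    by (intro tendsto_intros C)
  moreover have "(\<lambda>m. exp (2 * dd (Suc m))) = (\<lambda>m. s2 (Suc m))"
    using s2_dd by (metis Suc_le_mono le0 One_nat_def)
  ultimately have "(\<lambda>m. s2 (Suc m)) \<longlonglongrightarrow> exp (2 * C)" by simp
  then have "s2 \<longlonglongrightarrow> exp (2 * C)" by (rule LIMSEQ_imp_Suc)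
  then show ?thesis using that by simp
qed

lemma wallis_aux: fixes a B N :: real assumes "B \<noteq> 0" "N \<ge> 0"
  shows "a^4/(B^2*(2*N+1)) * (4*(1+N)^2/(4*(1+N)^2 - 1)) = (2*(1+N)*a)^4/(((2*N+2)*(2*N+1)*B)^2*(2*(1+N)+1))"
proof -
  have e1: "4 * (1 + N) ^ 2 - 1 = (2 * N + 1) * (2 * N + 3)" by (simp add: power2_eq_square algebra_simps)
  have e2: "(2*(1+N)*a)^4 = 4 * (1+N)^2 * (4 * (1+N)^2 * a^4)" by (simp add: power2_eq_square power4_eq_xxxx algebra_simps)
  have e3: "((2*N+2)*(2*N+1)*B)^2*(2*(1+N)+1) = 4 * (1+N)^2 * ((2*N+1)*(2*N+1)*B^2*(2*N+3))"
    by (simp add: power2_eq_square algebra_simps)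
  have ne: "2 * N + 1 \<noteq> 0" "2 * N + 3 \<noteq> 0" "1 + N \<noteq> 0" using assms by auto
  have "(2*(1+N)*a)^4/(((2*N+2)*(2*N+1)*B)^2*(2*(1+N)+1)) = (4 * (1+N)^2 * a^4) / ((2*N+1)*(2*N+1)*B^2*(2*N+3))"
    unfolding e2 e3 using ne by (subst mult_divide_mult_cancel_left) auto
  also have "\<dots> = a^4/(B^2*(2*N+1)) * (4*(1+N)^2/((2*N+1)*(2*N+3)))"
    by (simp add: field_simps)
  finally show ?thesis unfolding e1 by simp
qed

lemma wallis_closed:
  "(\<Prod>k=1..n. (4 * real k ^ 2) / (4 * real k ^ 2 - 1)) =
     (2 ^ n * fact n) ^ 4 / (fact (2 * n) ^ 2 * (2 * real n + 1))"
proof (induction n)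
  case 0 then show ?case by simp
next
  case (Suc n)
  have f: "(fact (2 * Suc n) :: real) = (2 * real n + 2) * (2 * real n + 1) * fact (2 * n)"
    by (simp add: algebra_simps)
  have B: "(fact (2 * n) :: real) \<noteq> 0" by simp
  have "(\<Prod>k=1..Suc n. (4 * real k ^ 2) / (4 * real k ^ 2 - 1)) =
        (2 ^ n * fact n) ^ 4 / (fact (2 * n) ^ 2 * (2 * real n + 1)) *
        ((4 * real (Suc n) ^ 2) / (4 * real (Suc n) ^ 2 - 1))"
    using Suc by (simp add: prod.cl_ivl_Suc)
  also have "\<dots> = (2 ^ Suc n * fact (Suc n)) ^ 4 / (fact (2 * Suc n) ^ 2 * (2 * real (Suc n) + 1))"
  proof -
    define N where "N = real n"
    have N0: "N \<ge> 0" unfolding N_def by simp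
    have e1: "4 * (1 + N) ^ 2 - 1 = (2 * N + 1) * (2 * N + 3)" by (simp add: power2_eq_square algebra_simps)
    have mult_ac_eq: "2 * 2 ^ n * ((1 + N) * fact n) = 2 * (1 + N) * (2 ^ n * fact n)" by (simp add: mult_ac)
    show ?thesis unfolding f
      apply (simp only: of_nat_Suc fact_Suc power_Suc of_nat_mult flip: N_def)
      apply (subst mult_ac_eq)
      apply (rule wallis_aux[OF B N0])
      done
  qed
  finally show ?case .
qed

lemma s2_alg: fixes A B N P Q e :: real assumes "N > 0" "P > 0" "e > 0" "B > 0"
 shows "(A^2*e^2/(N*P))^2 * (N/(2*(2*N+1))) / (B^2*(e^2)^2/(2*Q^4*N*P^2)) = (Q*A)^4/(B^2*(2*N+1))"
proof -
  have c: "2*N+1 > 0" using assms by simp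
  have "(A^2*e^2/(N*P))^2 * (N/(2*(2*N+1))) / (B^2*(e^2)^2/(2*Q^4*N*P^2))
    = (A^4*e^4*N*(2*Q^4*N*P^2)) / (N^2*P^2*(2*(2*N+1))*(B^2*e^4))"
    using assms by (simp add: power2_eq_square power4_eq_xxxx field_simps)
  also have "\<dots> = ((Q*A)^4 * (2*e^4*N^2*P^2)) / ((B^2*(2*N+1)) * (2*e^4*N^2*P^2))"
    by (simp add: power2_eq_square power4_eq_xxxx mult_ac)
  also have "\<dots> = (Q*A)^4/(B^2*(2*N+1))"
    using assms c by (intro mult_divide_mult_cancel_right) simp
  finally show ?thesis .
qed

lemma wallis_s2: assumes "n \<ge> 1"
  shows "(\<Prod>k=1..n. (4 * real k ^ 2) / (4 * real k ^ 2 - 1)) =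
         s2 n ^ 2 * (real n / (2 * (2 * real n + 1))) / s2 (2 * n)"
proof -
  define N where "N = real n"
  define P where "P = N ^ (2 * n)"
  define e where "e = exp N"
  define A where "A = (fact n :: real)"
  define B where "B = (fact (2 * n) :: real)"
  define Q where "Q = (2::real) ^ n"
  have N0: "N > 0" using assms unfolding N_def by simp
  have P0: "P > 0" using N0 unfolding P_def by simp
  have e0: "e > 0" unfolding e_def by simp
  have B0: "B > 0" unfolding B_def by simp
  have h1: "real n ^ (2 * n + 1) = N * P" unfolding N_def P_def by simp
  have h2: "real (2 * n) ^ (2 * n * 2 + 1) = 2 * Q ^ 4 * N * P ^ 2"
    unfolding N_def P_def Q_def
    by (simp add: power_mult_distrib power_add power_mult[symmetric] mult_ac)
  have h3: "exp (real (2 * n)) = e ^ 2" unfolding e_def N_def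
    by (simp add: exp_of_nat_mult[symmetric] mult_ac)
  have s2a: "s2 n = A ^ 2 * e ^ 2 / (N * P)" unfolding s2_def h1 A_def e_def N_def ..
  have s2b: "s2 (2 * n) = B ^ 2 * (e ^ 2) ^ 2 / (2 * Q ^ 4 * N * P ^ 2)"
    unfolding s2_def B_def h3 using h2 by (simp add: mult_ac)
  have W: "(\<Prod>k=1..n. (4 * real k ^ 2) / (4 * real k ^ 2 - 1)) = (Q * A) ^ 4 / (B ^ 2 * (2 * N + 1))"
    unfolding wallis_closed Q_def A_def B_def N_def ..
  show ?thesis unfolding W s2a s2b N_def[symmetric] using s2_alg[OF N0 P0 e0 B0] by simp
qed

lemma s2_lim: "s2 \<longlonglongrightarrow> 2 * pi"
proof -
  obtain M where M: "s2 \<longlonglongrightarrow> M" "M > 0" using s2_conv by blast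
  have sm: "strict_mono (\<lambda>n::nat. 2 * n)" by (rule strict_monoI) simp
  have M2: "(\<lambda>n. s2 (2 * n)) \<longlonglongrightarrow> M"
    using LIMSEQ_subseq_LIMSEQ[OF M(1) sm] by (simp add: o_def)
  have r: "(\<lambda>n. real n / (2 * (2 * real n + 1))) \<longlonglongrightarrow> 1/4"
    by real_asymp
  have "(\<lambda>n. s2 n ^ 2 * (real n / (2 * (2 * real n + 1))) / s2 (2 * n)) \<longlonglongrightarrow> M ^ 2 * (1/4) / M"
    using M by (intro tendsto_intros M2 r) auto
  moreover have "eventually (\<lambda>n. s2 n ^ 2 * (real n / (2 * (2 * real n + 1))) / s2 (2 * n) =
        (\<Prod>k=1..n. (4 * real k ^ 2) / (4 * real k ^ 2 - 1))) sequentially"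
    using eventually_ge_at_top[of 1] by eventually_elim (rule wallis_s2[symmetric], simp)
  ultimately have "(\<lambda>n. \<Prod>k=1..n. (4 * real k ^ 2) / (4 * real k ^ 2 - 1)) \<longlonglongrightarrow> M ^ 2 * (1/4) / M"
    by (rule Lim_transform_eventually)
  then have "M ^ 2 * (1/4) / M = pi / 2" using wallis LIMSEQ_unique by blast
  then have "M = 2 * pi" using M(2) by (simp add: power2_eq_square field_simps)
  then show ?thesis using M(1) by simp
qed

lemma integrand_eq:
  "lemma3_integrand n \<tau> \<theta> =
     of_real (exp (- (real n * \<tau>))) * (exp (of_real (real n * \<tau>) * cis \<theta>) * cis (- (real n * \<theta>)))"
proof -
  have s: "(sin (\<theta> / 2))\<^sup>2 = (1 - cos \<theta>) / 2"
    using cos_double_sin[of "\<theta> / 2"] by simp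
  have L: "lemma3_integrand n \<tau> \<theta> =
      exp (- \<i> * of_real (real n * (\<theta> - \<tau> * sin \<theta>)) + of_real (- 2 * real n * \<tau> * (sin (\<theta> / 2))\<^sup>2))"
    unfolding lemma3_integrand_def by (simp only: exp_add exp_of_real)
  have R: "of_real (exp (- (real n * \<tau>))) * (exp (of_real (real n * \<tau>) * cis \<theta>) * cis (- (real n * \<theta>)))
      = exp (of_real (- (real n * \<tau>)) + of_real (real n * \<tau>) * cis \<theta> + \<i> * of_real (- (real n * \<theta>)))"
    by (simp only: cis_conv_exp exp_add exp_of_real mult.assoc)
  have "- \<i> * of_real (real n * (\<theta> - \<tau> * sin \<theta>)) + of_real (- 2 * real n * \<tau> * (sin (\<theta> / 2))\<^sup>2)
      = of_real (- (real n * \<tau>)) + of_real (real n * \<tau>) * cis \<theta> + \<i> * of_real (- (real n * \<theta>))"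
  proof -
    have s': "(sin (\<theta> / 2))\<^sup>2 * 2 = 1 - cos \<theta>" using s by simp
    have "- 2 * real n * \<tau> * (sin (\<theta> / 2))\<^sup>2 = - (real n * \<tau>) * ((sin (\<theta> / 2))\<^sup>2 * 2)"
      by (simp only: mult_ac mult_minus_left)
    also have "\<dots> = - (real n * \<tau>) + real n * \<tau> * cos \<theta>" unfolding s' by (simp add: algebra_simps)
    finally have re: "- 2 * real n * \<tau> * (sin (\<theta> / 2))\<^sup>2 = - (real n * \<tau>) + real n * \<tau> * cos \<theta>" .
    show ?thesis unfolding re by (simp add: complex_eq_iff algebra_simps)
  qed
  then show ?thesis unfolding L R by simp
qed

lemma I_eq: "lemma3_I n \<tau> = of_real (exp (- (real n * \<tau>)) * (real n * \<tau>) ^ n / fact n)"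
proof -
  have "((\<lambda>t. of_real (exp (- (real n * \<tau>))) * (exp (of_real (real n * \<tau>) * cis t) * cis (- (real n * t))))
      has_integral of_real (exp (- (real n * \<tau>))) * of_real (2 * pi * (real n * \<tau>) ^ n / fact n)) {-pi..pi}"
    by (intro has_integral_mult_right fourier_exp)
  then have "integral {-pi..pi} (lemma3_integrand n \<tau>) =
      of_real (exp (- (real n * \<tau>))) * of_real (2 * pi * (real n * \<tau>) ^ n / fact n)"
    unfolding integrand_eq[abs_def] by (rule integral_unique)
  then show ?thesis unfolding lemma3_I_def by (simp add: field_simps)
qed

definition qq :: "nat \<Rightarrow> real" where
  "qq n = sqrt (2 * pi * real n) * real n ^ n / (exp (real n) * fact n)"

lemma main_qq: assumes "n \<ge> 1" "\<tau> > 0"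
  shows "lemma3_main n \<tau> * qq n = exp (- (real n * \<tau>)) * (real n * \<tau>) ^ n / fact n"
proof -
  have "exp (real n * (ln \<tau> + 1 - \<tau>)) = exp (real n * ln \<tau>) * exp (real n) * exp (- (real n * \<tau>))"
    by (simp add: exp_add[symmetric] algebra_simps)
  also have "exp (real n * ln \<tau>) = \<tau> ^ n" using assms by (simp add: exp_of_nat_mult)
  finally have e: "exp (real n * (ln \<tau> + 1 - \<tau>)) = \<tau> ^ n * exp (real n) * exp (- (real n * \<tau>))" .
  have n0: "real n > 0" using assms(1) by simp
  have p: "sqrt (2 * pi * real n) > 0" using n0 by simp
  show ?thesis unfolding lemma3_main_def qq_def e using p n0
    by (simp add: field_simps power_mult_distrib)
qed

lemma qq_sqrt: assumes "n \<ge> 1" shows "qq n = sqrt (2 * pi / s2 n)"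
proof -
  have n0: "real n > 0" using assms by simp
  have q0: "qq n \<ge> 0" unfolding qq_def by simp
  define X where "X = real n ^ n"
  define A where "A = (fact n :: real)"
  define e where "e = exp (real n)"
  have X0: "X > 0" unfolding X_def using n0 by simp
  have A0: "A > 0" unfolding A_def by simp
  have e0: "e > 0" unfolding e_def by simp
  have a: "(qq n) ^ 2 = (2 * pi * real n) * X ^ 2 / (e ^ 2 * A ^ 2)"
    unfolding qq_def X_def[symmetric] A_def[symmetric] e_def[symmetric] power_divide power_mult_distrib
    using n0 by (simp only: real_sqrt_pow2 mult_nonneg_nonneg pi_ge_zero of_nat_0_le_iff zero_le_numeral)
  have b: "real n ^ (2 * n + 1) = real n * X ^ 2"
    unfolding X_def by (simp only: power_add power_one_right mult.commute[of 2 n] power_mult mult.commute)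
  have c: "s2 n = A ^ 2 * e ^ 2 / (real n * X ^ 2)"
    unfolding s2_def b A_def e_def ..
  have "(qq n) ^ 2 = 2 * pi / s2 n"
    unfolding a c using X0 A0 e0 n0 by (simp add: field_simps)
  then have "sqrt (2 * pi / s2 n) = sqrt ((qq n) ^ 2)" by simp
  also have "\<dots> = qq n" using q0 by simp
  finally show ?thesis ..
qed

lemma qq_lim: "qq \<longlonglongrightarrow> 1"
proof -
  have "(\<lambda>n. sqrt (2 * pi / s2 n)) \<longlonglongrightarrow> sqrt (2 * pi / (2 * pi))"
    by (intro tendsto_intros s2_lim) simp
  then have "(\<lambda>n. sqrt (2 * pi / s2 n)) \<longlonglongrightarrow> 1" by simp
  moreover have "eventually (\<lambda>n. sqrt (2 * pi / s2 n) = qq n) sequentially"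
    using eventually_ge_at_top[of 1] by eventually_elim (simp add: qq_sqrt)
  ultimately show ?thesis by (rule Lim_transform_eventually)
qed

theorem lemma3:
  fixes \<delta> :: real and \<tau> :: "nat \<Rightarrow> real"
  assumes "0 < \<delta>" and "\<delta> < 1/3"
    and "eventually (\<lambda>n. \<tau> n > real n powr (- \<delta>)) at_top"
  shows "\<exists>(e :: nat \<Rightarrow> complex) (r :: nat \<Rightarrow> complex).
           e \<longlonglongrightarrow> 0 \<and> r \<in> o(\<lambda>n. 1 / of_nat n) \<and>
           eventually (\<lambda>n. lemma3_I n (\<tau> n) =
              of_real (lemma3_main n (\<tau> n)) * (1 + e n) + r n) at_top"
proof (intro exI conjI)
  show "(\<lambda>n. complex_of_real (qq n - 1)) \<longlonglongrightarrow> 0"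
  proof -
    have "(\<lambda>n. qq n - 1) \<longlonglongrightarrow> 1 - 1" by (intro tendsto_intros qq_lim)
    then have "(\<lambda>n. complex_of_real (qq n - 1)) \<longlonglongrightarrow> complex_of_real (1 - 1)" by (rule tendsto_of_real)
    then show ?thesis by simp
  qed
  show "(\<lambda>n. 0::complex) \<in> o(\<lambda>n. 1 / of_nat n)" by simp
  show "eventually (\<lambda>n. lemma3_I n (\<tau> n) =
          of_real (lemma3_main n (\<tau> n)) * (1 + complex_of_real (qq n - 1)) + 0) at_top"
    using assms(3) eventually_ge_at_top[of 1]
  proof eventually_elim
    case (elim n)
    have "real n powr (- \<delta>) > 0" using elim(2) by simp
    then have t: "\<tau> n > 0" using elim(1) by linarith
    have "of_real (lemma3_main n (\<tau> n)) * (1 + complex_of_real (qq n - 1)) + 0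
        = of_real (lemma3_main n (\<tau> n)) * of_real (qq n)" by simp
    also have "\<dots> = of_real (lemma3_main n (\<tau> n) * qq n)" by (simp only: of_real_mult)
    also have "\<dots> = lemma3_I n (\<tau> n)" unfolding I_eq main_qq[OF elim(2) t] ..
    finally show ?case ..
  qed
qed

end
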